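(* Let $P$ be a probability measure on $(\Omega,\mathcal A)$, let $\delta\in(\tfrac12,1)$, and let $\bar{\mathbf C}_1,\bar{\mathbf C}_2\subseteq\bar{\mathcal A}$ be C-classes. If $\bar T(P,\delta)\subseteq\bar{\mathbf C}_1\cap\bar{\mathbf C}_2$, then $\bar{\mathbf C}_1\sim\bar{\mathbf C}_2$, i.e. $\bar M_{\bar{\mathbf C}_1}=\bar M_{\bar{\mathbf C}_2}$.
   Context: Let $(\Omega,\mathcal A)$ be a measurable space. For $n\ge1$, $\mathcal A^n$ is the product $\sigma$-algebra on $\Omega^n$; the extended event space is $\bar{\mathcal A}=\bigcup_{n\ge1}\mathcal A^n$, events tagged by their level $n$ (written $A^{(n)}$). For $k\ge1$, $(\Omega^n)^k$ is identified with $\Omega^{nk}$ and $(\mathcal A^n)^k$ with $\mathcal A^{nk}$. For a probability measure $P$ on $\mathcal A$, $P^n$ is its $n$-fold product, $\bar P(A^{(n)})=P^n(A^{(n)})$, and $\bar T(P,\delta)=\{A\in\bar{\mathcal A}:\bar P(A)\ge\delta\}$. For $A^{(n)}\in\mathcal A^n$, an interval $I\subseteq[0,1]$ and $k\in\mathbb N^+$, $S(A^{(n)},I,k)=\{(\omega_1,\dots,\omega_k)\in(\Omega^n)^k:\frac1k\sum_{i=1}^k\chi_{A^{(n)}}(\omega_i)\in I\}$. A class $\bar{\mathbf C}\subseteq\bar{\mathcal A}$ is a C-class if for every $n$ the component $\mathcal C^{(n)}=\bar{\mathbf C}\cap\mathcal A^n$ satisfies: $\Omega^n\in\mathcal C^{(n)}$;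 closed under supersets within $\mathcal A^n$; contains no two disjoint events. "$S(A,I,k)\in\bar{\mathbf C}$ definitively" means there is $k_0$ with $S(A,I,k)\in\bar{\mathbf C}$ for all $k>k_0$. The C-measure of a C-class is $\bar M_{\bar{\mathbf C}}(A)=\sup\{\sigma\in[0,1]: S(A,[\sigma,1],k)\in\bar{\mathbf C}\text{ definitively}\}$. Two C-classes are equivalent, $\bar{\mathbf C}_1\sim\bar{\mathbf C}_2$, if $\bar M_{\bar{\mathbf C}_1}=\bar M_{\bar{\mathbf C}_2}$. *)

theory Defs
  imports "HOL-Probability.Probability"
begin

text \<open>Omega^n with the product sigma-algebra, realised as the product measure over
  coordinates {..<n}.  An extended event A^(n) is a pair (n, A).\<close>

definition PowM :: "'a measure \<Rightarrow> nat \<Rightarrow> (nat \<Rightarrow> 'a) measure" where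
  "PowM M n = PiM {..<n} (\<lambda>_. M)"

type_synonym 'a xevent = "nat \<times> (nat \<Rightarrow> 'a) set"

definition ext_events :: "'a measure \<Rightarrow> 'a xevent set" where
  "ext_events M = {(n, A). n \<ge> 1 \<and> A \<in> sets (PowM M n)}"

definition barP :: "'a measure \<Rightarrow> 'a xevent \<Rightarrow> real" where
  "barP M E = measure (PowM M (fst E)) (snd E)"

definition barT :: "'a measure \<Rightarrow> real \<Rightarrow> 'a xevent set" where
  "barT M \<delta> = {E \<in> ext_events M. barP M E \<ge> \<delta>}"

definition block :: "nat \<Rightarrow> nat \<Rightarrow> (nat \<Rightarrow> 'a) \<Rightarrow> (nat \<Rightarrow> 'a)" where
  "block n i \<omega> = (\<lambda>j\<in>{..<n}. \<omega> (i * n + j))"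

definition Sfreq :: "'a measure \<Rightarrow> 'a xevent \<Rightarrow> real set \<Rightarrow> nat \<Rightarrow> 'a xevent" where
  "Sfreq M E I k = (fst E * k,
     {\<omega> \<in> space (PowM M (fst E * k)).
        (1 / real k) * (\<Sum>i<k. indicator (snd E) (block (fst E) i \<omega>)) \<in> I})"

definition C_class :: "'a measure \<Rightarrow> 'a xevent set \<Rightarrow> bool" where
  "C_class M C \<longleftrightarrow> C \<subseteq> ext_events M \<and>
     (\<forall>n\<ge>1. (n, space (PowM M n)) \<in> C
        \<and> (\<forall>A B. (n, A) \<in> C \<and> B \<in> sets (PowM M n) \<and> A \<subseteq> B \<longrightarrow> (n, B) \<in> C)
        \<and> (\<forall>A B. (n, A) \<in> C \<and> (n, B) \<in> C \<longrightarrow> A \<inter> B \<noteq> {}))"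

definition C_measure :: "'a measure \<Rightarrow> 'a xevent set \<Rightarrow> 'a xevent \<Rightarrow> real" where
  "C_measure M C E = Sup {\<sigma> \<in> {0..1}. \<exists>k0. \<forall>k>k0. Sfreq M E {\<sigma>..1} k \<in> C}"

definition C_equiv :: "'a measure \<Rightarrow> 'a xevent set \<Rightarrow> 'a xevent set \<Rightarrow> bool" where
  "C_equiv M C1 C2 \<longleftrightarrow> (\<forall>E \<in> ext_events M. C_measure M C1 E = C_measure M C2 E)"

end

theory Submission
  imports Defs
begin


lemma coords_indep:
  assumes M: "prob_space M" and I: "I \<noteq> {}"
  shows "prob_space.indep_vars (PiM I (\<lambda>_. M)) (\<lambda>_. M) (\<lambda>j \<omega>. \<omega> j) I"
proof -
  interpret N: prob_space "PiM I (\<lambda>_. M)" by (rule prob_space_PiM) (use M in auto)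
  have c: "distr (PiM I (\<lambda>_. M)) M (\<lambda>\<omega>. \<omega> j) = M" if "j \<in> I" for j
    using distr_PiM_component[of I "\<lambda>_. M" j] M that by auto
  have "PiM I (\<lambda>j. distr (PiM I (\<lambda>_. M)) M (\<lambda>\<omega>. \<omega> j)) = PiM I (\<lambda>_. M)"
    by (rule PiM_cong) (auto simp: c)
  moreover have "distr (PiM I (\<lambda>_. M)) (PiM I (\<lambda>_. M)) (\<lambda>x. \<lambda>i\<in>I. x i) = distr (PiM I (\<lambda>_. M)) (PiM I (\<lambda>_. M)) (\<lambda>x. x)"
    by (rule distr_cong) (auto simp: space_PiM PiE_def extensional_restrict)
  ultimately show ?thesis
    by (subst N.indep_vars_iff_distr_eq_PiM'[OF I]) (auto simp: distr_id)
qed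



lemma block_meas:
  assumes "i < k"
  shows "block n i \<in> measurable (PowM M (n*k)) (PowM M n)"
proof -
  have "i*n + n \<le> k*n" using assms by (metis add.commute mult_Suc mult_le_mono1 Suc_leI)
  then have "\<And>j. j < n \<Longrightarrow> i*n+j < n*k" by (simp add: mult.commute)
  then show ?thesis unfolding block_def PowM_def
    by (intro measurable_restrict measurable_component_singleton) auto
qed

lemma blocks_indep:
  assumes M: "prob_space M" and k: "k \<ge> 1" and n: "n \<ge> 1"
  shows "prob_space.indep_vars (PowM M (n*k)) (\<lambda>_. PowM M n) (\<lambda>i. block n i) {..<k}"
proof -
  define K where "K = (\<lambda>i::nat. {i*n..<i*n+n})"
  have ne: "{..<n*k} \<noteq> {}"
  proof -
    have "0 \<in> {..<n*k}" using k n by simp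
    then show ?thesis by blast
  qed
  interpret N: prob_space "PowM M (n*k)" unfolding PowM_def by (rule prob_space_PiM) (use M in auto)
  have ind: "N.indep_vars (\<lambda>_. M) (\<lambda>j \<omega>. \<omega> j) {..<n*k}"
    using coords_indep[OF M ne] unfolding PowM_def .
  have sub: "K i \<subseteq> {..<n*k}" if "i \<in> {..<k}" for i
  proof -
    have "i*n + n \<le> k*n" using that by (metis lessThan_iff add.commute mult_Suc mult_le_mono1 Suc_leI)
    then show ?thesis by (auto simp: K_def mult.commute)
  qed
  have disj: "disjoint_family_on K {..<k}"
    unfolding disjoint_family_on_def
  proof (intro ballI impI)
    fix i i' :: nat assume "i \<noteq> i'"
    have "K a \<inter> K b = {}" if "a < b" for a b
    proof -
      have "a*n + n \<le> b*n" using that by (metis add.commute mult_Suc mult_le_mono1 Suc_leI)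
      then show ?thesis by (auto simp: K_def)
    qed
    then show "K i \<inter> K i' = {}" using \<open>i \<noteq> i'\<close> by (metis Int_commute nat_neq_iff)
  qed
  have r: "N.indep_vars (\<lambda>i. PiM (K i) (\<lambda>_. M)) (\<lambda>i \<omega>. restrict (\<lambda>j. \<omega> j) (K i)) {..<k}"
    by (rule N.indep_vars_restrict[OF ind sub disj])
  define Y where "Y = (\<lambda>(i::nat) (f::nat \<Rightarrow> 'a). \<lambda>j\<in>{..<n}. f (i*n+j))"
  have c: "N.indep_vars (\<lambda>_. PowM M n) (\<lambda>i x. Y i (restrict (\<lambda>j. x j) (K i))) {..<k}"
  proof (rule N.indep_vars_compose2[OF r])
    fix i assume "i \<in> {..<k}"
    show "Y i \<in> measurable (PiM (K i) (\<lambda>_. M)) (PowM M n)"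
      unfolding Y_def PowM_def
      by (intro measurable_restrict measurable_component_singleton) (auto simp: K_def)
  qed
  have e: "(\<lambda>i x. Y i (restrict (\<lambda>j. x j) (K i))) = (\<lambda>i. block n i)"
    by (auto simp: fun_eq_iff block_def K_def Y_def)
  show ?thesis using c unfolding e .
qed

lemma block_distr:
  assumes M: "prob_space M" and "i < k"
  shows "distr (PowM M (n*k)) (PowM M n) (block n i) = PowM M n"
proof -
  have "i*n + n \<le> k*n" using assms by (metis add.commute mult_Suc mult_le_mono1 Suc_leI)
  then have "(\<lambda>j. i*n+j) \<in> {..<n} \<rightarrow> {..<n*k}" by (auto simp: mult.commute)
  moreover have "inj_on (\<lambda>j. i*n+j) {..<n}" by (auto simp: inj_on_def)
  ultimately show ?thesis unfolding PowM_def block_def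
    using distr_PiM_reindex[of "{..<n*k}" "\<lambda>_. M" "\<lambda>j. i*n+j" "{..<n}"] M by auto
qed




lemma tail:
  assumes M: "prob_space M" and n: "n \<ge> 1" and A: "A \<in> sets (PowM M n)" and k: "k \<ge> 1" and t: "t \<ge> 0"
  defines "p \<equiv> measure (PowM M n) A"
  defines "F \<equiv> \<lambda>\<omega>. (1 / real k) * (\<Sum>i<k. indicator A (block n i \<omega>))"
  shows "measure (PowM M (n*k)) {\<omega>\<in>space (PowM M (n*k)). F \<omega> \<le> p - t} \<le> exp (-2*real k*t\<^sup>2)"
    and "measure (PowM M (n*k)) {\<omega>\<in>space (PowM M (n*k)). F \<omega> \<ge> p + t} \<le> exp (-2*real k*t\<^sup>2)"
proof -
  interpret N: prob_space "PowM M (n*k)" unfolding PowM_def by (rule prob_space_PiM) (use M in auto)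
  interpret Pn: prob_space "PowM M n" unfolding PowM_def by (rule prob_space_PiM) (use M in auto)
  define X where "X = (\<lambda>i \<omega>. indicator A (block n i \<omega>) :: real)"
  have ind: "N.indep_vars (\<lambda>_. borel) X {..<k}"
    unfolding X_def
    by (rule N.indep_vars_compose2[OF blocks_indep[OF M k n]]) (use A in auto)
  have EX: "N.expectation (X i) = p" if "i < k" for i
  proof -
    have "N.expectation (X i) = integral\<^sup>L (distr (PowM M (n*k)) (PowM M n) (block n i)) (indicator A)"
      unfolding X_def using A block_meas[OF that] by (subst integral_distr) auto
    also have "\<dots> = p" using A by (simp add: block_distr[OF M that] p_def)
    finally show ?thesis .
  qed
  interpret H: Hoeffding_ineq "PowM M (n*k)" "{..<k}" X "\<lambda>_. 0" "\<lambda>_. 1" "real k * p"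
    proof unfold_locales
    show "finite {..<k}" by simp
    show "N.indep_vars (\<lambda>_. borel) X {..<k}" by (rule ind)
    show "\<And>i. i \<in> {..<k} \<Longrightarrow> AE x in PowM M (n * k). X i x \<in> {0..1}"
      unfolding X_def by (intro AE_I2) (auto simp: indicator_def)
    show "real k * p \<equiv> \<Sum>i\<in>{..<k}. N.expectation (X i)"
      using EX by simp
  qed
  have pos: "(\<Sum>i<k. ((1::real) - 0)\<^sup>2) > 0" using k by simp
  have kt: "0 \<le> real k * t" using t by simp
  have ex: "exp (- 2 * (real k * t)\<^sup>2 / (\<Sum>i<k. ((1::real) - 0)\<^sup>2)) = exp (-2*real k*t\<^sup>2)"
    using k by (simp add: power2_eq_square)
  have kp: "real k > 0" using k by simp
  have F: "F \<omega> = (\<Sum>i<k. X i \<omega>) / real k" for \<omega> by (simp add: F_def X_def)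
  have s1: "{\<omega>\<in>space (PowM M (n*k)). F \<omega> \<le> p - t} = {\<omega>\<in>space (PowM M (n*k)). (\<Sum>i<k. X i \<omega>) \<le> real k * p - real k * t}"
  proof (rule Collect_cong)
    fix \<omega>
    have "(F \<omega> \<le> p - t) = ((\<Sum>i<k. X i \<omega>) \<le> (p - t) * real k)"
      unfolding F by (rule pos_divide_le_eq[OF kp])
    also have "(p - t) * real k = real k * p - real k * t" by (simp add: algebra_simps)
    finally show "(\<omega> \<in> space (PowM M (n*k)) \<and> F \<omega> \<le> p - t) = (\<omega> \<in> space (PowM M (n*k)) \<and> (\<Sum>i<k. X i \<omega>) \<le> real k * p - real k * t)" by simp
  qed
  have s2: "{\<omega>\<in>space (PowM M (n*k)). F \<omega> \<ge> p + t} = {\<omega>\<in>space (PowM M (n*k)). (\<Sum>i<k. X i \<omega>) \<ge> real k * p + real k * t}"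
  proof (rule Collect_cong)
    fix \<omega>
    have "(p + t \<le> F \<omega>) = ((p + t) * real k \<le> (\<Sum>i<k. X i \<omega>))"
      unfolding F by (rule pos_le_divide_eq[OF kp])
    also have "(p + t) * real k = real k * p + real k * t" by (simp add: algebra_simps)
    finally show "(\<omega> \<in> space (PowM M (n*k)) \<and> F \<omega> \<ge> p + t) = (\<omega> \<in> space (PowM M (n*k)) \<and> (\<Sum>i<k. X i \<omega>) \<ge> real k * p + real k * t)" by simp
  qed
  show "measure (PowM M (n*k)) {\<omega>\<in>space (PowM M (n*k)). F \<omega> \<le> p - t} \<le> exp (-2*real k*t\<^sup>2)"
    unfolding s1 using H.Hoeffding_ineq_le[OF kt pos] ex by simp
  show "measure (PowM M (n*k)) {\<omega>\<in>space (PowM M (n*k)). F \<omega> \<ge> p + t} \<le> exp (-2*real k*t\<^sup>2)"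
    unfolding s2 using H.Hoeffding_ineq_ge[OF kt pos] ex by simp
qed

lemma exp_small:
  assumes t: "t > 0" and c: "c > 0"
  shows "\<exists>k0. \<forall>k>k0. exp (-2*real k*t\<^sup>2) \<le> c"
proof (intro exI allI impI)
  fix k assume "k > nat \<lceil>- ln c / (2*t\<^sup>2)\<rceil>"
  then have "real k \<ge> - ln c / (2*t\<^sup>2)" by linarith
  then have "- ln c / (2*t\<^sup>2) * (2*t\<^sup>2) \<le> real k * (2*t\<^sup>2)" by (rule mult_right_mono) auto
  then have "real k * (2*t\<^sup>2) \<ge> - ln c" using t by simp
  then have "-2*real k*t\<^sup>2 \<le> ln c" by (simp add: algebra_simps)
  then have "exp (-2*real k*t\<^sup>2) \<le> exp (ln c)" by simp
  then show "exp (-2*real k*t\<^sup>2) \<le> c" using c by simp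
qed

lemma F_meas:
  assumes A: "A \<in> sets (PowM M n)"
  shows "(\<lambda>\<omega>. (1 / real k) * (\<Sum>i<k. indicator A (block n i \<omega>)) :: real) \<in> borel_measurable (PowM M (n*k))"
  by (intro borel_measurable_times borel_measurable_const borel_measurable_sum
      measurable_compose[OF block_meas borel_measurable_indicator[OF A]]) auto

lemma F_bounds:
  assumes "k \<ge> 1"
  shows "(1 / real k) * (\<Sum>i<k. indicator A (block n i \<omega>)) \<in> {0..(1::real)}"
proof -
  have "(\<Sum>i<k. indicator A (block n i \<omega>)) \<le> (\<Sum>i<k. (1::real))"
    by (intro sum_mono) (auto simp: indicator_def)
  moreover have "(\<Sum>i<k. indicator A (block n i \<omega>)) \<ge> (0::real)"
    by (intro sum_nonneg) auto
  ultimately show ?thesis using assms by (auto simp: field_simps)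
qed


lemma Cmeasure_eq:
  assumes M: "prob_space M" and d1: "1/2 < \<delta>" and d2: "\<delta> < 1"
    and C: "C_class M C" and T: "barT M \<delta> \<subseteq> C" and E: "E \<in> ext_events M"
  shows "C_measure M C E = barP M E"
proof -
  obtain n A where EA: "E = (n, A)" and n: "n \<ge> 1" and A: "A \<in> sets (PowM M n)"
    using E unfolding ext_events_def by auto
  interpret Pn: prob_space "PowM M n" unfolding PowM_def by (rule prob_space_PiM) (use M in auto)
  define p where "p = measure (PowM M n) A"
  have p01: "0 \<le> p" "p \<le> 1" unfolding p_def by auto
  define F where "F = (\<lambda>k \<omega>. (1 / real k) * (\<Sum>i<k. indicator A (block n i \<omega>)) :: real)"
  have Sf: "Sfreq M E I k = (n*k, {\<omega>\<in>space (PowM M (n*k)). F k \<omega> \<in> I})" for I k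
    by (simp add: Sfreq_def EA F_def)
  have setsF: "{\<omega>\<in>space (PowM M (n*k)). F k \<omega> \<in> I} \<in> sets (PowM M (n*k))" if "I \<in> sets borel" for I k
  proof -
    have "F k \<in> borel_measurable (PowM M (n*k))" unfolding F_def by (rule F_meas[OF A])
    from measurable_sets[OF this that] show ?thesis by (simp add: vimage_def Int_def conj_commute)
  qed
  have inT: "(n*k, B) \<in> C" if "k \<ge> 1" "B \<in> sets (PowM M (n*k))" "measure (PowM M (n*k)) B \<ge> \<delta>" for k B
  proof -
    have "n*k \<ge> 1" using n that by simp
    then have "(n*k, B) \<in> barT M \<delta>" using that by (simp add: barT_def ext_events_def barP_def)
    then show ?thesis using T by blast
  qed
  define S where "S = {\<sigma> \<in> {0..1}. \<exists>k0. \<forall>k>k0. Sfreq M E {\<sigma>..1} k \<in> C}"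
  have Cprops: "\<And>m. m \<ge> 1 \<Longrightarrow> (m, space (PowM M m)) \<in> C"
    "\<And>m X Y. m \<ge> 1 \<Longrightarrow> (m, X) \<in> C \<Longrightarrow> (m, Y) \<in> C \<Longrightarrow> X \<inter> Y \<noteq> {}"
    using C unfolding C_class_def by blast+
  have zero: "0 \<in> S"
  proof -
    have "Sfreq M E {0..1} k \<in> C" if "k > 0" for k
    proof -
      have "{\<omega>\<in>space (PowM M (n*k)). F k \<omega> \<in> {0..1}} = space (PowM M (n*k))"
        using F_bounds[of k A n] that by (auto simp: F_def)
      moreover have "n*k \<ge> 1" using n that by simp
      ultimately show ?thesis using Cprops(1) by (simp add: Sf)
    qed
    then show ?thesis unfolding S_def by auto
  qed
  have below: "\<sigma> \<in> S" if "0 \<le> \<sigma>" "\<sigma> < p" for \<sigma>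
  proof -
    define t where "t = p - \<sigma>"
    have t: "t > 0" using that by (simp add: t_def)
    obtain k0 where k0: "\<And>k. k > k0 \<Longrightarrow> exp (-2*real k*t\<^sup>2) \<le> 1 - \<delta>"
      using exp_small[OF t, of "1 - \<delta>"] d2 by auto
    have "Sfreq M E {\<sigma>..1} k \<in> C" if "k > k0" for k
    proof -
      interpret N: prob_space "PowM M (n*k)" unfolding PowM_def by (rule prob_space_PiM) (use M in auto)
      have k: "k \<ge> 1" using that by simp
      let ?B = "{\<omega>\<in>space (PowM M (n*k)). F k \<omega> \<in> {..p - t}}"
      have Bs: "?B \<in> sets (PowM M (n*k))" by (rule setsF) auto
      have "N.prob ?B \<le> exp (-2*real k*t\<^sup>2)"
        using tail(1)[OF M n A k, of t] t by (simp add: F_def p_def)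
      then have pB: "N.prob ?B \<le> 1 - \<delta>" using k0[OF that] by linarith
      have sub: "space (PowM M (n*k)) - ?B \<subseteq> {\<omega>\<in>space (PowM M (n*k)). F k \<omega> \<in> {\<sigma>..1}}"
        using F_bounds[of k A n] k by (auto simp: F_def t_def)
      have "N.prob (space (PowM M (n*k)) - ?B) = 1 - N.prob ?B" by (rule N.prob_compl[OF Bs])
      also have "\<dots> \<ge> \<delta>" using pB by linarith
      finally have "\<delta> \<le> N.prob {\<omega>\<in>space (PowM M (n*k)). F k \<omega> \<in> {\<sigma>..1}}"
        using N.finite_measure_mono[OF sub setsF[of "{\<sigma>..1}" k]] by auto
      then show ?thesis unfolding Sf by (intro inT k setsF) auto
    qed
    then show ?thesis unfolding S_def using that p01 by auto
  qed
  have above: "\<sigma> \<le> p" if "\<sigma> \<in> S" for \<sigma>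
  proof (rule ccontr)
    assume "\<not> \<sigma> \<le> p"
    define t where "t = \<sigma> - p"
    have t: "t > 0" using \<open>\<not> \<sigma> \<le> p\<close> by (simp add: t_def)
    obtain k0 where k0: "\<And>k. k > k0 \<Longrightarrow> exp (-2*real k*t\<^sup>2) \<le> 1 - \<delta>"
      using exp_small[OF t, of "1 - \<delta>"] d2 by auto
    obtain k1 where k1: "\<And>k. k > k1 \<Longrightarrow> Sfreq M E {\<sigma>..1} k \<in> C"
      using \<open>\<sigma> \<in> S\<close> unfolding S_def by auto
    define k where "k = Suc (max k0 k1)"
    have kk: "k > k0" "k > k1" "k \<ge> 1" by (auto simp: k_def)
    interpret N: prob_space "PowM M (n*k)" unfolding PowM_def by (rule prob_space_PiM) (use M in auto)
    let ?B = "{\<omega>\<in>space (PowM M (n*k)). F k \<omega> \<in> {p + t..}}"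
    have Bs: "?B \<in> sets (PowM M (n*k))" by (rule setsF) auto
    have "N.prob ?B \<le> exp (-2*real k*t\<^sup>2)"
      using tail(2)[OF M n A kk(3), of t] t by (simp add: F_def p_def)
    then have pB: "N.prob ?B \<le> 1 - \<delta>" using k0[OF kk(1)] by linarith
    have "N.prob (space (PowM M (n*k)) - ?B) = 1 - N.prob ?B" by (rule N.prob_compl[OF Bs])
    also have "\<dots> \<ge> \<delta>" using pB by linarith
    finally have D: "(n*k, space (PowM M (n*k)) - ?B) \<in> C"
      by (intro inT kk(3)) (use Bs in auto)
    have S1: "(n*k, {\<omega>\<in>space (PowM M (n*k)). F k \<omega> \<in> {\<sigma>..1}}) \<in> C"
      using k1[OF kk(2)] by (simp add: Sf)
    have "{\<omega>\<in>space (PowM M (n*k)). F k \<omega> \<in> {\<sigma>..1}} \<inter> (space (PowM M (n*k)) - ?B) = {}"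
      by (auto simp: t_def)
    moreover have "n*k \<ge> 1" using n kk by simp
    ultimately show False using Cprops(2)[OF _ S1 D] by blast
  qed
  have ne: "S \<noteq> {}" using zero by blast
  have bdd: "bdd_above S" unfolding S_def by (intro bdd_aboveI[of _ 1]) auto
  have "Sup S = p"
  proof (rule antisym)
    show "Sup S \<le> p" using ne above by (intro cSup_least) auto
    show "p \<le> Sup S"
    proof (cases "p = 0")
      case True then show ?thesis using cSup_upper[OF zero bdd] by simp
    next
      case False
      then have "0 < p" using p01 by simp
      then show ?thesis
        by (rule dense_le_bounded) (use below bdd in \<open>auto intro: cSup_upper\<close>)
    qed
  qed
  then show ?thesis unfolding C_measure_def barP_def EA S_def p_def by simp
qed


theorem mainTheorem7:
  fixes M :: "'a measure" and \<delta> :: real and C1 C2 :: "'a xevent set"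
  assumes "prob_space M"
    and "1/2 < \<delta>" and "\<delta> < 1"
    and "C_class M C1" and "C_class M C2"
    and "barT M \<delta> \<subseteq> C1 \<inter> C2"
  shows "C_equiv M C1 C2"
  unfolding C_equiv_def
proof
  fix E assume E: "E \<in> ext_events M"
  have "barT M \<delta> \<subseteq> C1" "barT M \<delta> \<subseteq> C2" using assms(6) by auto
  then show "C_measure M C1 E = C_measure M C2 E"
    using Cmeasure_eq[OF assms(1-3) assms(4) _ E] Cmeasure_eq[OF assms(1-3) assms(5) _ E] by simp
qed

end
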